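(* Let $1\le a<b$ and $m\ge1$ be integers, let $t_a,\dots,t_{b-1}$ be indeterminates, and let $x^{(k)}_1,\dots,x^{(k)}_m$ ($a\le k\le b$) be variables. Let $S^{(k)}_m$ denote the symmetric group permuting $x^{(k)}_1,\dots,x^{(k)}_m$. Then $$\sum_{w\in S^{(a)}_m\times\cdots\times S^{(b-1)}_m}w\left(\prod_{a\le k<b}\prod_{2\le j\le m}\frac{x^{(k)}_1-t_kx^{(k+1)}_j}{x^{(k)}_1-x^{(k)}_j}\right)=\bigl((m-1)!\bigr)^{b-a}.$$
   Context: The group $S^{(a)}_m\times\cdots\times S^{(b-1)}_m$ acts on rational functions by permuting the variables $x^{(k)}_i$ within each family $k\in\{a,\dots,b-1\}$ and fixing the variables $x^{(b)}_j$ and the $t_k$. *)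

theory Defs
  imports "HOL-Library.FuncSet" "HOL-Combinatorics.Permutations"
begin

text \<open>A group element w of S^(a)_m x ... x S^(b-1)_m is a family sigma of permutations
  of {1..m}, indexed by k in {a..<b}.\<close>

definition act_var :: "nat \<Rightarrow> nat \<Rightarrow> (nat \<Rightarrow> nat \<Rightarrow> nat) \<Rightarrow> (nat \<Rightarrow> nat \<Rightarrow> 'a) \<Rightarrow> nat \<Rightarrow> nat \<Rightarrow> 'a" where
  "act_var a b \<sigma> x k i = (if k \<in> {a..<b} then x k (\<sigma> k i) else x k i)"

definition perm_families :: "nat \<Rightarrow> nat \<Rightarrow> nat \<Rightarrow> (nat \<Rightarrow> nat \<Rightarrow> nat) set" where
  "perm_families a b m = ({a..<b} \<rightarrow>\<^sub>E {p. p permutes {1..m}})"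

definition lemma_summand :: "nat \<Rightarrow> nat \<Rightarrow> nat \<Rightarrow> (nat \<Rightarrow> 'a::field) \<Rightarrow> (nat \<Rightarrow> nat \<Rightarrow> 'a) \<Rightarrow> 'a" where
  "lemma_summand a b m t y =
     (\<Prod>k\<in>{a..<b}. \<Prod>j\<in>{2..m}. (y k 1 - t k * y (k+1) j) / (y k 1 - y k j))"

end

theory Submission imports Defs begin

definition lag :: "(nat \<Rightarrow> 'a::field) \<Rightarrow> (nat \<Rightarrow> 'a) \<Rightarrow> nat set \<Rightarrow> nat set \<Rightarrow> 'a" where
  "lag x c I J = (\<Sum>i\<in>I. (\<Prod>j\<in>J. x i - c j) / (\<Prod>l\<in>I-{i}. x i - x l))"

lemma drop_lemma:
  fixes x :: "nat \<Rightarrow> 'a::field"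
  assumes "finite I" "inj_on x I" "i1 \<in> I"
  shows "(\<Sum>i\<in>I. (x i - x i1) * h i / (\<Prod>l\<in>I-{i}. x i - x l))
       = (\<Sum>i\<in>I-{i1}. h i / (\<Prod>l\<in>I-{i1}-{i}. x i - x l))"
proof -
  have "(\<Sum>i\<in>I. (x i - x i1) * h i / (\<Prod>l\<in>I-{i}. x i - x l))
      = (\<Sum>i\<in>I-{i1}. (x i - x i1) * h i / (\<Prod>l\<in>I-{i}. x i - x l))"
    using assms by (simp add: sum.remove)
  also have "\<dots> = (\<Sum>i\<in>I-{i1}. h i / (\<Prod>l\<in>I-{i1}-{i}. x i - x l))"
  proof (rule sum.cong)
    fix i assume i: "i \<in> I - {i1}"
    have e: "I - {i} = insert i1 (I-{i1}-{i})" using i assms by auto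
    have ne: "x i - x i1 \<noteq> 0" using i assms by (auto simp: inj_on_def)
    have "(\<Prod>l\<in>I-{i}. x i - x l) = (x i - x i1) * (\<Prod>l\<in>I-{i1}-{i}. x i - x l)"
      unfolding e using assms by (subst prod.insert) auto
    then show "(x i - x i1) * h i / (\<Prod>l\<in>I-{i}. x i - x l) = h i / (\<Prod>l\<in>I-{i1}-{i}. x i - x l)"
      using ne by simp
  qed simp
  finally show ?thesis .
qed

lemma lag_main:
  fixes x :: "nat \<Rightarrow> 'a::field"
  shows "finite I \<Longrightarrow> card I = n \<Longrightarrow> 1 \<le> n \<Longrightarrow> inj_on x I \<Longrightarrow> finite J \<Longrightarrow> card J \<le> n - 1
    \<Longrightarrow> lag x c I J = (if card J = n - 1 then 1 else 0)"
proof (induction n arbitrary: I J rule: less_induct)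
  case (less n)
  note IH = less.IH
  have fI: "finite I" and cI: "card I = n" and n1: "1 \<le> n" and inj: "inj_on x I" using less.prems by auto
  have "finite J \<Longrightarrow> card J \<le> n - 1 \<Longrightarrow> lag x c I J = (if card J = n - 1 then 1 else 0)" for J
  proof (induction J rule: finite_induct)
    case empty
    show ?case
    proof (cases "n = 1")
      case True
      then obtain i where "I = {i}" using cI by (auto simp: card_Suc_eq)
      then show ?thesis using True by (simp add: lag_def)
    next
      case False
      then have "card I \<ge> 2" using cI n1 by auto
      then obtain i0 i1 where i: "i0 \<in> I" "i1 \<in> I" "i0 \<noteq> i1"
        by (metis card_2_iff' card_le_Suc_iff numeral_2_eq_2 obtain_subset_with_card_n subset_iff)
      have ne: "x i0 - x i1 \<noteq> 0" using i inj by (auto simp: inj_on_def)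
      have one: "\<And>i. (1::'a) = ((x i - x i1) * 1 - (x i - x i0) * 1) / (x i0 - x i1)"
        using ne by (simp add: field_simps)
      have "lag x c I {} = (\<Sum>i\<in>I. ((x i - x i1) * 1 - (x i - x i0) * 1) / (x i0 - x i1) / (\<Prod>l\<in>I-{i}. x i - x l))"
        unfolding lag_def using ne by (intro sum.cong refl) simp
      also have "\<dots> = ((\<Sum>i\<in>I. (x i - x i1) * 1 / (\<Prod>l\<in>I-{i}. x i - x l))
                     - (\<Sum>i\<in>I. (x i - x i0) * 1 / (\<Prod>l\<in>I-{i}. x i - x l))) / (x i0 - x i1)"
      proof -
        have "(\<Sum>i\<in>I. ((x i - x i1) * 1 - (x i - x i0) * 1) / (x i0 - x i1) / (\<Prod>l\<in>I-{i}. x i - x l))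
          = (\<Sum>i\<in>I. ((x i - x i1) * 1 / (\<Prod>l\<in>I-{i}. x i - x l) - (x i - x i0) * 1 / (\<Prod>l\<in>I-{i}. x i - x l)) / (x i0 - x i1))"
          by (intro sum.cong refl) (simp only: diff_divide_distrib divide_divide_eq_left ac_simps)
        then show ?thesis by (simp only: sum_divide_distrib[symmetric] sum_subtractf)
      qed
      also have "\<dots> = (lag x c (I-{i1}) {} - lag x c (I-{i0}) {}) / (x i0 - x i1)"
        unfolding lag_def using drop_lemma[OF fI inj i(1), of "\<lambda>_. 1"] drop_lemma[OF fI inj i(2), of "\<lambda>_. 1"] by simp
      also have "lag x c (I-{i1}) {} = (if card ({}::nat set) = (n-1) - 1 then 1 else 0)"
        using i fI cI n1 False inj by (intro IH) (auto intro: inj_on_subset)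
      also have "lag x c (I-{i0}) {} = (if card ({}::nat set) = (n-1) - 1 then 1 else 0)"
        using i fI cI n1 False inj by (intro IH) (auto intro: inj_on_subset)
      finally show ?thesis using False n1 by simp
    qed
  next
    case (insert j J)
    have n2: "n \<ge> 2" using insert by auto
    obtain i0 where i0: "i0 \<in> I" using n1 cI by fastforce
    have "lag x c I (insert j J) = (\<Sum>i\<in>I. (x i - x i0) * (\<Prod>j\<in>J. x i - c j) / (\<Prod>l\<in>I-{i}. x i - x l)
              + (x i0 - c j) * ((\<Prod>j\<in>J. x i - c j) / (\<Prod>l\<in>I-{i}. x i - x l)))"
      unfolding lag_def
    proof (intro sum.cong refl)
      fix i
      let ?P = "\<Prod>j\<in>J. x i - c j" and ?D = "\<Prod>l\<in>I-{i}. x i - x l"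
      have e: "(x i - x i0) * ?P + (x i0 - c j) * ?P = (x i - c j) * ?P" by (simp add: algebra_simps)
      have "(\<Prod>j\<in>insert j J. x i - c j) = (x i - c j) * ?P" using insert by simp
      then show "(\<Prod>j\<in>insert j J. x i - c j) / ?D = (x i - x i0) * ?P / ?D + (x i0 - c j) * (?P / ?D)"
        by (metis e add_divide_distrib times_divide_eq_right)
    qed
    also have "\<dots> = lag x c (I-{i0}) J + (x i0 - c j) * lag x c I J"
      unfolding lag_def sum.distrib sum_distrib_left[symmetric] using drop_lemma[OF fI inj i0] by simp
    also have "lag x c I J = 0" using insert by auto
    also have "lag x c (I-{i0}) J = (if card J = (n-1) - 1 then 1 else 0)"
      using i0 fI cI n2 inj insert by (intro IH) (auto intro: inj_on_subset)
    finally show ?case using insert n2 by auto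
  qed
  then show ?case using less.prems by blast
qed


lemma level:
  fixes x c :: "nat \<Rightarrow> 'a::field_char_0"
  assumes m1: "1 \<le> m" and inj: "inj_on x {1..m}"
  shows "(\<Sum>p\<in>{p. p permutes {1..m}}. \<Prod>j\<in>{2..m}. (x (p 1) - c j) / (x (p 1) - x (p j)))
         = of_nat (fact (m - 1))"
proof -
  define F where "F i = (\<Prod>j\<in>{2..m}. x i - c j) / (\<Prod>l\<in>{1..m}-{i}. x i - x l)" for i
  let ?S = "{p. p permutes {1..m}}"
  have eq: "(\<Prod>j\<in>{2..m}. (x (p 1) - c j) / (x (p 1) - x (p j))) = F (p 1)" if p: "p permutes {1..m}" for p
  proof -
    have im: "p ` {2..m} = {1..m} - {p 1}"
    proof -
      have "{2..m} = {1..m} - {1::nat}" by auto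
      then show ?thesis using image_set_diff[OF permutes_inj[OF p]] permutes_image[OF p] by simp
    qed
    have "(\<Prod>j\<in>{2..m}. x (p 1) - x (p j)) = (\<Prod>l\<in>p ` {2..m}. x (p 1) - x l)"
      by (subst prod.reindex) (auto intro: inj_on_subset[OF permutes_inj[OF p]])
    then show ?thesis unfolding F_def prod_dividef im by simp
  qed
  have sym: "(\<Sum>p\<in>?S. F (p 1)) = (\<Sum>p\<in>?S. F (p l))" if l: "l \<in> {1..m}" for l
  proof -
    have q: "transpose 1 l permutes {1..m}" using l m1 by (intro permutes_swap_id) auto
    show ?thesis using sum_permutations_compose_right[OF q, of "\<lambda>p. F (p 1)"] by simp
  qed
  have "of_nat m * (\<Sum>p\<in>?S. F (p 1)) = (\<Sum>l\<in>{1..m}. \<Sum>p\<in>?S. F (p l))"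
  proof -
    have "(\<Sum>l\<in>{1..m}. \<Sum>p\<in>?S. F (p l)) = (\<Sum>l\<in>{1..m}. \<Sum>p\<in>?S. F (p 1))"
      by (rule sum.cong[OF refl]) (metis sym)
    then show ?thesis by simp
  qed
  also have "\<dots> = (\<Sum>p\<in>?S. \<Sum>l\<in>{1..m}. F (p l))" by (rule sum.swap)
  also have "\<dots> = (\<Sum>p\<in>?S. \<Sum>i\<in>{1..m}. F i)"
  proof (rule sum.cong[OF refl])
    fix p assume "p \<in> ?S"
    then have "p permutes {1..m}" by simp
    from sum.permute[OF this, of F] show "(\<Sum>l\<in>{1..m}. F (p l)) = (\<Sum>i\<in>{1..m}. F i)"
      by (simp add: comp_def)
  qed
  also have "(\<Sum>i\<in>{1..m}. F i) = lag x c {1..m} {2..m}" unfolding F_def lag_def by simp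
  also have "\<dots> = 1" using lag_main[of "{1..m}" m x "{2..m}" c] m1 inj by simp
  finally have "of_nat m * (\<Sum>p\<in>?S. F (p 1)) = of_nat (fact m)"
    by (simp add: card_permutations)
  also have "(of_nat (fact m) :: 'a) = of_nat m * of_nat (fact (m-1))"
    using m1 fact_reduce[of m] by (simp flip: of_nat_mult)
  finally have "(\<Sum>p\<in>?S. F (p 1)) = of_nat (fact (m-1))" using m1 by simp
  then show ?thesis using eq by simp
qed


lemma act_var_upd:
  assumes "Suc a \<le> k"
  shows "act_var a b (\<tau>(a := p)) x k i = act_var (Suc a) b \<tau> x k i"
  using assms by (auto simp: act_var_def)

lemma main_gen:
  fixes t :: "nat \<Rightarrow> 'a::field_char_0" and x :: "nat \<Rightarrow> nat \<Rightarrow> 'a"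
  assumes m1: "1 \<le> m"
  shows "b - a = d \<Longrightarrow> a \<le> b \<Longrightarrow> (\<And>k. k \<in> {a..<b} \<Longrightarrow> inj_on (x k) {1..m}) \<Longrightarrow>
    (\<Sum>\<sigma>\<in>perm_families a b m. lemma_summand a b m t (act_var a b \<sigma> x))
           = (of_nat (fact (m - 1)) :: 'a) ^ d"
proof (induction d arbitrary: a)
  case 0
  then have "a = b" by simp
  then show ?case by (simp add: perm_families_def lemma_summand_def)
next
  case (Suc d)
  then have ab: "a < b" by simp
  let ?T = "\<lambda>_::nat. {p. p permutes {1..m}}"
  let ?P = "perm_families (Suc a) b m"
  let ?f = "\<lambda>\<sigma>. lemma_summand a b m t (act_var a b \<sigma> x)"
  let ?R = "\<lambda>\<tau>. lemma_summand (Suc a) b m t (act_var (Suc a) b \<tau> x)"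
  define Y where "Y \<tau> j = act_var (Suc a) b \<tau> x (Suc a) j" for \<tau> j
  let ?A = "\<lambda>p \<tau>. \<Prod>j\<in>{2..m}. (x a (p 1) - t a * Y \<tau> j) / (x a (p 1) - x a (p j))"
  have fam: "perm_families a b m = (\<lambda>(y, g). g(a := y)) ` (?T a \<times> ?P)"
  proof -
    have "{a..<b} = insert a {Suc a..<b}" using ab by auto
    then show ?thesis unfolding perm_families_def by (simp add: PiE_insert_eq)
  qed
  have inj: "inj_on (\<lambda>(y, g). g(a := y)) (?T a \<times> ?P)"
    unfolding perm_families_def by (rule inj_combinator) simp
  have split: "?f (\<tau>(a := p)) = ?A p \<tau> * ?R \<tau>" for p \<tau>
  proof -
    have "{a..<b} = insert a {Suc a..<b}" using ab by auto
    then have "?f (\<tau>(a := p)) = (\<Prod>j\<in>{2..m}. (act_var a b (\<tau>(a := p)) x a 1 - t a * act_var a b (\<tau>(a := p)) x (a+1) j) /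
         (act_var a b (\<tau>(a := p)) x a 1 - act_var a b (\<tau>(a := p)) x a j)) *
       (\<Prod>k\<in>{Suc a..<b}. \<Prod>j\<in>{2..m}. (act_var a b (\<tau>(a := p)) x k 1 - t k * act_var a b (\<tau>(a := p)) x (k+1) j) /
         (act_var a b (\<tau>(a := p)) x k 1 - act_var a b (\<tau>(a := p)) x k j))"
      unfolding lemma_summand_def by simp
    also have "(\<Prod>k\<in>{Suc a..<b}. \<Prod>j\<in>{2..m}. (act_var a b (\<tau>(a := p)) x k 1 - t k * act_var a b (\<tau>(a := p)) x (k+1) j) /
         (act_var a b (\<tau>(a := p)) x k 1 - act_var a b (\<tau>(a := p)) x k j)) = ?R \<tau>"
      unfolding lemma_summand_def by (intro prod.cong refl) (simp add: act_var_upd)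
    also have "(\<Prod>j\<in>{2..m}. (act_var a b (\<tau>(a := p)) x a 1 - t a * act_var a b (\<tau>(a := p)) x (a+1) j) /
         (act_var a b (\<tau>(a := p)) x a 1 - act_var a b (\<tau>(a := p)) x a j)) = ?A p \<tau>"
      using ab by (intro prod.cong refl) (simp add: act_var_upd Y_def act_var_def)
    finally show ?thesis .
  qed
  have lev: "(\<Sum>p\<in>?T a. ?A p \<tau>) = of_nat (fact (m - 1))" for \<tau>
    using level[OF m1, of "x a" "\<lambda>j. t a * Y \<tau> j"] Suc.prems ab by simp
  have "(\<Sum>\<sigma>\<in>perm_families a b m. ?f \<sigma>) = (\<Sum>(p, \<tau>)\<in>?T a \<times> ?P. ?f (\<tau>(a := p)))"
    unfolding fam by (subst sum.reindex[OF inj]) (simp add: case_prod_unfold comp_def)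
  also have "\<dots> = (\<Sum>p\<in>?T a. \<Sum>\<tau>\<in>?P. ?A p \<tau> * ?R \<tau>)"
    by (simp add: sum.cartesian_product split)
  also have "\<dots> = (\<Sum>\<tau>\<in>?P. (\<Sum>p\<in>?T a. ?A p \<tau>) * ?R \<tau>)"
    by (subst sum.swap) (simp add: sum_distrib_right)
  also have "\<dots> = of_nat (fact (m - 1)) * (\<Sum>\<tau>\<in>?P. ?R \<tau>)"
    unfolding lev by (simp add: sum_distrib_left)
  also have "(\<Sum>\<tau>\<in>?P. ?R \<tau>) = (of_nat (fact (m - 1)) :: 'a) ^ d"
    using Suc.prems by (intro Suc.IH) auto
  finally show ?case by simp
qed

theorem lemma5p6:
  fixes a b m :: nat and t :: "nat \<Rightarrow> 'a::field_char_0" and x :: "nat \<Rightarrow> nat \<Rightarrow> 'a"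
  assumes "1 \<le> a" and "a < b" and "1 \<le> m"
    and "\<And>k. k \<in> {a..<b} \<Longrightarrow> inj_on (x k) {1..m}"
  shows "(\<Sum>\<sigma>\<in>perm_families a b m. lemma_summand a b m t (act_var a b \<sigma> x))
           = (of_nat (fact (m - 1)) :: 'a) ^ (b - a)"
  by (rule main_gen[OF assms(3) refl]) (use assms in auto)

end
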